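(* Let $\ell\ge1$ and let $\mathbf{s},\mathbf{p}\in\mathbb{Z}^{\ell+1}$ be column vectors with $\mathbf{s}_{\ell+1}=1$. Set $d:=\mathbf{s}^T\mathbf{p}$ and assume $d\neq0$; let $\gamma$ be the gcd of the entries of $\mathbf{p}$. Then the matrix $L:=dI_{\ell+1}-\mathbf{p}\mathbf{s}^T$ has cokernel $$\mathbb{Z}^{\ell+1}/\mathrm{im}\,L\cong\mathbb{Z}\oplus\mathbb{Z}/\gamma\mathbb{Z}\oplus(\mathbb{Z}/d\mathbb{Z})^{\ell-1}.$$ *)

theory Defs
  imports "HOL-Algebra.Algebra"
begin

definition intvec_group :: "nat \<Rightarrow> (nat \<Rightarrow> int) monoid" where
  "intvec_group l = product_group {..l} (\<lambda>_. integer_group)"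

definition Lmap :: "nat \<Rightarrow> (nat \<Rightarrow> int) \<Rightarrow> (nat \<Rightarrow> int) \<Rightarrow> (nat \<Rightarrow> int) \<Rightarrow> (nat \<Rightarrow> int)" where
  "Lmap l s p v = (\<lambda>i\<in>{..l}. (\<Sum>j\<le>l. s j * p j) * v i - p i * (\<Sum>j\<le>l. s j * v j))"

definition target_group :: "nat \<Rightarrow> int \<Rightarrow> int \<Rightarrow> (nat \<Rightarrow> int) monoid" where
  "target_group l g d = product_group {..l}
     (\<lambda>i. if i = 0 then integer_group
          else if i = 1 then integer_mod_group (nat \<bar>g\<bar>)
          else integer_mod_group (nat \<bar>d\<bar>))"

end

theory Submission
  imports Defs
begin

definition eqv :: "nat \<Rightarrow> (nat\<Rightarrow>int) \<Rightarrow> (nat\<Rightarrow>int) \<Rightarrow> bool" where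
  "eqv n x y \<longleftrightarrow> (\<forall>i<n. x i = y i)"

definition good :: "nat \<Rightarrow> ((nat\<Rightarrow>int) \<Rightarrow> (nat\<Rightarrow>int)) \<Rightarrow> bool" where
  "good n f \<longleftrightarrow> (\<forall>x y. eqv n x y \<longrightarrow> eqv n (f x) (f y))
     \<and> (\<forall>x y. eqv n (f (\<lambda>i. x i + y i)) (\<lambda>i. f x i + f y i))
     \<and> (\<forall>c x. eqv n (f (\<lambda>i. c * x i)) (\<lambda>i. c * f x i))"

lemma eqv_refl[simp]: "eqv n x x" by (simp add: eqv_def)
lemma eqv_sym: "eqv n x y \<Longrightarrow> eqv n y x" by (simp add: eqv_def)
lemma eqv_trans: "eqv n x y \<Longrightarrow> eqv n y z \<Longrightarrow> eqv n x z" by (simp add: eqv_def)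

lemma good_comp:
  assumes f: "good n f" and g: "good n g" shows "good n (f \<circ> g)"
proof -
  have fc: "\<And>x y. eqv n x y \<Longrightarrow> eqv n (f x) (f y)" and gc: "\<And>x y. eqv n x y \<Longrightarrow> eqv n (g x) (g y)"
    using f g unfolding good_def by blast+
  have fa: "\<And>x y. eqv n (f (\<lambda>i. x i + y i)) (\<lambda>i. f x i + f y i)"
    and ga: "\<And>x y. eqv n (g (\<lambda>i. x i + y i)) (\<lambda>i. g x i + g y i)"
    and fm: "\<And>c x. eqv n (f (\<lambda>i. c * x i)) (\<lambda>i. c * f x i)"
    and gm: "\<And>c x. eqv n (g (\<lambda>i. c * x i)) (\<lambda>i. c * g x i)"
    using f g unfolding good_def by blast+
  have 1: "eqv n (f (g (\<lambda>i. x i + y i))) (\<lambda>i. f (g x) i + f (g y) i)" for x y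
    using eqv_trans[OF fc[OF ga[of x y]] fa[of "g x" "g y"]] .
  have 2: "eqv n (f (g (\<lambda>i. c * x i))) (\<lambda>i. c * f (g x) i)" for c x
    using eqv_trans[OF fc[OF gm[of c x]] fm[of c "g x"]] .
  show ?thesis unfolding good_def o_def using fc gc 1 2 by blast
qed

lemma good_id: "good n id" by (simp add: good_def)

lemma good_lin:
  assumes "good n f"
  shows "eqv n (f (\<lambda>i. a * x i + b * y i)) (\<lambda>i. a * f x i + b * f y i)"
proof -
  have add: "\<forall>x y. eqv n (f (\<lambda>i. x i + y i)) (\<lambda>i. f x i + f y i)"
    using assms unfolding good_def by blast
  have "eqv n (f (\<lambda>i. a * x i + b * y i)) (\<lambda>i. f (\<lambda>i. a * x i) i + f (\<lambda>i. b * y i) i)"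
    using add[rule_format, of "\<lambda>i. a * x i" "\<lambda>i. b * y i"] by simp
  moreover have "eqv n (f (\<lambda>i. a * x i)) (\<lambda>i. a * f x i)" "eqv n (f (\<lambda>i. b * y i)) (\<lambda>i. b * f y i)"
    using assms unfolding good_def by blast+
  ultimately show ?thesis unfolding eqv_def by simp
qed

lemma good_cong: "good n f \<Longrightarrow> eqv n x y \<Longrightarrow> eqv n (f x) (f y)"
  unfolding good_def by blast

definition inv_pair where
  "inv_pair n A B \<longleftrightarrow> good n A \<and> good n B \<and> (\<forall>x. eqv n (B (A x)) x) \<and> (\<forall>x. eqv n (A (B x)) x)"

lemma inv_pair_comp:
  assumes "inv_pair n A B" "inv_pair n A' B'"
  shows "inv_pair n (A' \<circ> A) (B \<circ> B')"
  using assms unfolding inv_pair_def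
  by (auto intro: good_comp) (meson eqv_trans good_cong)+

definition ext1 :: "nat \<Rightarrow> ((nat\<Rightarrow>int) \<Rightarrow> (nat\<Rightarrow>int)) \<Rightarrow> (nat\<Rightarrow>int) \<Rightarrow> (nat\<Rightarrow>int)" where
  "ext1 n f x = (\<lambda>i. if i < n then f x i else x i)"

lemma good_ext1: "good n f \<Longrightarrow> good (Suc n) (ext1 n f)"
  unfolding good_def eqv_def ext1_def
  by (auto simp: less_Suc_eq)

lemma inv_pair_ext1: assumes a: "inv_pair n A B" shows "inv_pair (Suc n) (ext1 n A) (ext1 n B)"
proof -
  have 1: "eqv n (B (ext1 n A x)) x" for x
  proof -
    have "eqv n (ext1 n A x) (A x)" by (simp add: ext1_def eqv_def)
    hence "eqv n (B (ext1 n A x)) (B (A x))" using a good_cong unfolding inv_pair_def by blast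
    thus ?thesis using a unfolding inv_pair_def by (meson eqv_trans)
  qed
  have 2: "eqv n (A (ext1 n B x)) x" for x
  proof -
    have "eqv n (ext1 n B x) (B x)" by (simp add: ext1_def eqv_def)
    hence "eqv n (A (ext1 n B x)) (A (B x))" using a good_cong unfolding inv_pair_def by blast
    thus ?thesis using a unfolding inv_pair_def by (meson eqv_trans)
  qed
  show ?thesis using a 1 2 unfolding inv_pair_def
    by (auto intro: good_ext1 simp: ext1_def eqv_def less_Suc_eq)
qed

definition mat2 :: "nat \<Rightarrow> int \<Rightarrow> int \<Rightarrow> int \<Rightarrow> int \<Rightarrow> (nat\<Rightarrow>int) \<Rightarrow> (nat\<Rightarrow>int)" where
  "mat2 n \<alpha> \<beta> \<gamma> \<delta> u = (\<lambda>i. if i = 0 then \<alpha> * u 0 + \<beta> * u n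
      else if i = n then \<gamma> * u 0 + \<delta> * u n else u i)"

lemma good_mat2: "n \<noteq> 0 \<Longrightarrow> good (Suc n) (mat2 n \<alpha> \<beta> \<gamma> \<delta>)"
  unfolding good_def eqv_def mat2_def by (auto simp: algebra_simps)

lemma inv_pair_mat2:
  assumes "n \<noteq> 0" "\<alpha> * \<delta> - \<beta> * \<gamma> = 1"
  shows "inv_pair (Suc n) (mat2 n \<alpha> \<beta> \<gamma> \<delta>) (mat2 n \<delta> (-\<beta>) (-\<gamma>) \<alpha>)"
proof -
  have e: "\<alpha> * (\<gamma> * a + \<delta> * b) - \<gamma> * (\<alpha> * a + \<beta> * b) = b"
    "\<delta> * (\<alpha> * a + \<beta> * b) - \<beta> * (\<gamma> * a + \<delta> * b) = a"
    "\<gamma> * (\<delta> * a - \<beta> * b) + \<delta> * (\<alpha> * b - \<gamma> * a) = b"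
    "\<alpha> * (\<delta> * a - \<beta> * b) + \<beta> * (\<alpha> * b - \<gamma> * a) = a" for a b
  proof -
    have "\<alpha> * (\<gamma> * a + \<delta> * b) - \<gamma> * (\<alpha> * a + \<beta> * b) = (\<alpha> * \<delta> - \<beta> * \<gamma>) * b"
      "\<delta> * (\<alpha> * a + \<beta> * b) - \<beta> * (\<gamma> * a + \<delta> * b) = (\<alpha> * \<delta> - \<beta> * \<gamma>) * a"
      "\<gamma> * (\<delta> * a - \<beta> * b) + \<delta> * (\<alpha> * b - \<gamma> * a) = (\<alpha> * \<delta> - \<beta> * \<gamma>) * b"
      "\<alpha> * (\<delta> * a - \<beta> * b) + \<beta> * (\<alpha> * b - \<gamma> * a) = (\<alpha> * \<delta> - \<beta> * \<gamma>) * a"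
      by (simp_all add: algebra_simps)
    thus "\<alpha> * (\<gamma> * a + \<delta> * b) - \<gamma> * (\<alpha> * a + \<beta> * b) = b"
    "\<delta> * (\<alpha> * a + \<beta> * b) - \<beta> * (\<gamma> * a + \<delta> * b) = a"
    "\<gamma> * (\<delta> * a - \<beta> * b) + \<delta> * (\<alpha> * b - \<gamma> * a) = b"
    "\<alpha> * (\<delta> * a - \<beta> * b) + \<beta> * (\<alpha> * b - \<gamma> * a) = a" using assms(2) by simp_all
  qed
  show ?thesis
    unfolding inv_pair_def using assms(1)
    by (auto simp: good_mat2 eqv_def mat2_def e)
qed

lemma reduce:
  "\<exists>A B g. inv_pair n A B \<and> eqv n (A p) (\<lambda>i. if i = 0 then g else 0)
      \<and> (\<forall>x. x dvd g \<longleftrightarrow> (\<forall>i<n. x dvd p i))"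
proof (induction n)
  case 0
  show ?case
    by (rule exI[of _ id], rule exI[of _ id], rule exI[of _ 0])
      (simp add: inv_pair_def good_def eqv_def)
next
  case (Suc n)
  show ?case
  proof (cases "n = 0")
    case True
    show ?thesis
      by (rule exI[of _ id], rule exI[of _ id], rule exI[of _ "p 0"])
        (simp add: inv_pair_def good_def eqv_def True)
  next
    case nz: False
    from Suc.IH obtain A0 B0 g where
      ip0: "inv_pair n A0 B0" and ap0: "eqv n (A0 p) (\<lambda>i. if i = 0 then g else 0)"
      and dv0: "\<forall>x. x dvd g \<longleftrightarrow> (\<forall>i<n. x dvd p i)" by blast
    define A1 where "A1 = ext1 n A0"
    define B1 where "B1 = ext1 n B0"
    have ip1: "inv_pair (Suc n) A1 B1" using ip0 by (simp add: A1_def B1_def inv_pair_ext1)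
    have ap1: "eqv (Suc n) (A1 p) (\<lambda>i. if i = 0 then g else if i = n then p n else 0)"
      using ap0 nz by (auto simp: A1_def ext1_def eqv_def less_Suc_eq)
    have dv1: "(\<forall>i<Suc n. x dvd p i) \<longleftrightarrow> x dvd g \<and> x dvd p n" for x
      using dv0 by (auto simp: less_Suc_eq)
    show ?thesis
    proof (cases "g = 0 \<and> p n = 0")
      case True
      show ?thesis
        apply (rule exI[of _ A1], rule exI[of _ B1], rule exI[of _ 0])
        using ip1 ap1 True dv1 by (auto simp: eqv_def)
    next
      case False
      define h where "h = gcd g (p n)"
      have hnz: "h \<noteq> 0" using False by (simp add: h_def)
      obtain u v where uv: "u * g + v * p n = h" using bezout_int unfolding h_def by blast
      define a where "a = g div h"
      define b where "b = p n div h"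
      have ga: "g = h * a" unfolding a_def h_def by simp
      have pb: "p n = h * b" unfolding b_def h_def by simp
      have "h * (u * a + v * b) = h * 1" using uv ga pb by (simp add: algebra_simps)
      hence det: "u * a - v * (- b) = 1" using hnz by simp
      define M where "M = mat2 n u v (-b) a"
      define Mi where "Mi = mat2 n a (-v) (-(-b)) u"
      have ipM: "inv_pair (Suc n) M Mi"
        unfolding M_def Mi_def by (rule inv_pair_mat2[OF nz det])
      have "eqv (Suc n) (M (A1 p)) (M (\<lambda>i. if i = 0 then g else if i = n then p n else 0))"
        using ipM ap1 good_cong unfolding inv_pair_def by blast
      moreover have "eqv (Suc n) (M (\<lambda>i. if i = 0 then g else if i = n then p n else 0))
                       (\<lambda>i. if i = 0 then h else 0)"
        using nz uv unfolding M_def mat2_def eqv_def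
        by (auto simp: ga pb algebra_simps)
      ultimately have apM: "eqv (Suc n) ((M \<circ> A1) p) (\<lambda>i. if i = 0 then h else 0)"
        using eqv_trans by auto
      have dvh: "\<forall>x. x dvd h \<longleftrightarrow> (\<forall>i<Suc n. x dvd p i)"
        using dv1 unfolding h_def by (simp add: gcd_greatest_iff)
      show ?thesis using inv_pair_comp[OF ip1 ipM] apM dvh by blast
    qed
  qed
qed

lemma sum_split: "(\<Sum>j\<le>(l::nat). f j) = (\<Sum>j<l. f j) + (f l::int)"
proof -
  have "{..l} = insert l {..<l}" by auto
  thus ?thesis by (simp add: add.commute)
qed

theorem lemma4p2:
  fixes l :: nat and s p :: "nat \<Rightarrow> int"
  assumes "l \<ge> 1"
    and "s l = 1"
    and "(\<Sum>j\<le>l. s j * p j) \<noteq> 0"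
  shows "intvec_group l Mod (Lmap l s p ` carrier (intvec_group l))
           \<cong> target_group l (Gcd (p ` {..l})) (\<Sum>j\<le>l. s j * p j)"
proof -
  define d where "d = (\<Sum>j\<le>l. s j * p j)"
  define \<gamma> where "\<gamma> = Gcd (p ` {..l})"
  have dnz: "d \<noteq> 0" using assms(3) d_def by simp
  obtain A B g where ip: "inv_pair l A B" and ap: "eqv l (A p) (\<lambda>i. if i = 0 then g else 0)"
    and dv: "\<forall>x. x dvd g \<longleftrightarrow> (\<forall>i<l. x dvd p i)" using reduce by blast
  have gA: "good l A" and gB: "good l B" and BA: "\<And>x. eqv l (B (A x)) x"
    and AB: "\<And>x. eqv l (A (B x)) x"
    using ip unfolding inv_pair_def by auto
  have dsp: "d = (\<Sum>j<l. s j * p j) + p l" unfolding d_def using assms(2) by (simp add: sum_split)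
  have gpos: "\<gamma> \<ge> 0" unfolding \<gamma>_def by simp
  have gdvd: "\<And>i. i \<le> l \<Longrightarrow> \<gamma> dvd p i" unfolding \<gamma>_def by (simp add: Gcd_dvd)
  have dvd_d: "(x dvd d \<and> (\<forall>i<l. x dvd p i)) \<longleftrightarrow> (\<forall>i\<le>l. x dvd p i)" for x
  proof
    assume h: "x dvd d \<and> (\<forall>i<l. x dvd p i)"
    have "x dvd (\<Sum>j<l. s j * p j)" using h by (auto intro!: dvd_sum)
    moreover have "p l = d - (\<Sum>j<l. s j * p j)" using dsp by simp
    ultimately have "x dvd p l" using h by (simp add: dvd_diff)
    thus "\<forall>i\<le>l. x dvd p i" using h by (auto simp: le_less)
  next
    assume h: "\<forall>i\<le>l. x dvd p i"
    thus "x dvd d \<and> (\<forall>i<l. x dvd p i)" unfolding d_def by (auto intro!: dvd_sum)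
  qed
  have gam_eq: "\<gamma> = gcd g d"
  proof (rule zdvd_antisym_nonneg)
    show "0 \<le> \<gamma>" by (rule gpos)
    show "0 \<le> gcd g d" by simp
    have "\<gamma> dvd g" using dv gdvd by simp
    moreover have "\<gamma> dvd d" using dvd_d[of \<gamma>] gdvd by simp
    ultimately show "\<gamma> dvd gcd g d" by simp
    have "gcd g d dvd g" "gcd g d dvd d" by simp_all
    hence "\<forall>i\<le>l. gcd g d dvd p i" using dv dvd_d[of "gcd g d"] by simp
    thus "gcd g d dvd \<gamma>" unfolding \<gamma>_def by (auto intro: Gcd_greatest)
  qed
  have gnz: "\<gamma> \<noteq> 0"
  proof
    assume "\<gamma> = 0"
    hence "p i = 0" if "i \<le> l" for i using gdvd[OF that] by simp
    hence "d = 0" unfolding d_def by simp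
    thus False using dnz by simp
  qed
  hence gpos': "\<gamma> > 0" using gpos by simp
  have gd: "\<gamma> dvd d" "\<gamma> dvd g" using gam_eq by simp_all
  obtain a b where bez: "a * g + b * d = \<gamma>" using bezout_int[of g d] gam_eq by auto
  define G where "G = intvec_group l"
  define H where "H = target_group l \<gamma> d"
  define \<phi> where "\<phi> = (\<lambda>v::nat\<Rightarrow>int. \<lambda>i\<in>{..l}. if i = 0 then (\<Sum>j\<le>l. s j * v j)
        else if i = 1 then A v 0 mod \<gamma> else A v (i - 1) mod \<bar>d\<bar>)"
  have ig: "int (nat \<bar>\<gamma>\<bar>) = \<gamma>" "int (nat \<bar>d\<bar>) = \<bar>d\<bar>" using gpos by simp_all
  have ng: "nat \<bar>\<gamma>\<bar> \<noteq> 0" "nat \<bar>d\<bar> \<noteq> 0" using gnz dnz by simp_all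
  have cG: "carrier G = (\<Pi>\<^sub>E i\<in>{..l}. UNIV)" unfolding G_def intvec_group_def by simp
  have cH: "carrier H = (\<Pi>\<^sub>E i\<in>{..l}. if i = 0 then UNIV else if i = 1 then {0..<\<gamma>} else {0..<\<bar>d\<bar>})"
    unfolding H_def target_group_def using ig ng
    by (auto simp: carrier_integer_mod_group PiE_def Pi_def split: if_splits)
  have grpG: "group G" unfolding G_def intvec_group_def by simp
  have grpH: "group H" unfolding H_def target_group_def by simp
  have Aloc: "\<And>x y. eqv l x y \<Longrightarrow> eqv l (A x) (A y)" using gA good_cong by blast
  have Bloc: "\<And>x y. eqv l x y \<Longrightarrow> eqv l (B x) (B y)" using gB good_cong by blast
  have Aadd: "A (\<lambda>i\<in>{..l}. v i + w i) i = A v i + A w i" if "i < l" for v w i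
  proof -
    have "eqv l (\<lambda>i\<in>{..l}. v i + w i) (\<lambda>i. v i + w i)" by (simp add: eqv_def)
    hence "eqv l (A (\<lambda>i\<in>{..l}. v i + w i)) (A (\<lambda>i. v i + w i))" by (rule Aloc)
    moreover have "eqv l (A (\<lambda>i. v i + w i)) (\<lambda>i. A v i + A w i)" using gA unfolding good_def by blast
    ultimately show ?thesis using that unfolding eqv_def by simp
  qed
  have dpos: "\<bar>d\<bar> > 0" using dnz by simp
  have hom: "\<phi> \<in> hom G H"
  proof (rule homI)
    fix v assume "v \<in> carrier G"
    have "\<phi> v i \<in> (if i = 0 then UNIV else if i = 1 then {0..<\<gamma>} else {0..<\<bar>d\<bar>})" if "i \<in> {..l}" for i
      using that gpos' dpos unfolding \<phi>_def by simp
    moreover have "\<phi> v \<in> extensional {..l}" unfolding \<phi>_def by simp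
    ultimately show "\<phi> v \<in> carrier H" unfolding cH by (simp add: PiE_iff)
  next
    fix v w assume v: "v \<in> carrier G" and w: "w \<in> carrier G"
    have m: "v \<otimes>\<^bsub>G\<^esub> w = (\<lambda>i\<in>{..l}. v i + w i)" unfolding G_def intvec_group_def by simp
    have mH: "x \<otimes>\<^bsub>H\<^esub> y = (\<lambda>i\<in>{..l}. if i = 0 then x i + y i else if i = 1 then (x i + y i) mod \<gamma>
        else (x i + y i) mod \<bar>d\<bar>)" for x y
      unfolding H_def target_group_def using ig gpos by (simp add: fun_eq_iff)
    have s1: "(\<Sum>j\<le>l. s j * (\<lambda>i\<in>{..l}. v i + w i) j) = (\<Sum>j\<le>l. s j * v j) + (\<Sum>j\<le>l. s j * w j)"
    proof -
      have "(\<Sum>j\<le>l. s j * (\<lambda>i\<in>{..l}. v i + w i) j) = (\<Sum>j\<le>l. s j * v j + s j * w j)"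
        by (rule sum.cong) (simp_all add: algebra_simps)
      thus ?thesis by (simp add: sum.distrib)
    qed
    show "\<phi> (v \<otimes>\<^bsub>G\<^esub> w) = \<phi> v \<otimes>\<^bsub>H\<^esub> \<phi> w"
      unfolding m mH
    proof (rule ext)
      fix i
      show "\<phi> (\<lambda>i\<in>{..l}. v i + w i) i = (\<lambda>i\<in>{..l}. if i = 0 then \<phi> v i + \<phi> w i
          else if i = 1 then (\<phi> v i + \<phi> w i) mod \<gamma> else (\<phi> v i + \<phi> w i) mod \<bar>d\<bar>) i"
      proof (cases "i \<le> l")
        case False thus ?thesis unfolding \<phi>_def by simp
      next
        case il: True
        show ?thesis
        proof (cases "i = 0")
          case True thus ?thesis using il s1 unfolding \<phi>_def by simp
        next
          case nz: False
          show ?thesis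
          proof (cases "i = 1")
            case True
            have "A (\<lambda>i\<in>{..l}. v i + w i) 0 = A v 0 + A w 0" using Aadd assms(1) by simp
            thus ?thesis using True il unfolding \<phi>_def by (simp add: mod_add_eq)
          next
            case False
            have "A (\<lambda>i\<in>{..l}. v i + w i) (i - 1) = A v (i - 1) + A w (i - 1)"
              using Aadd il nz by simp
            thus ?thesis using False nz il unfolding \<phi>_def by (simp add: mod_add_eq)
          qed
        qed
      qed
    qed
  qed
  interpret gh: group_hom G H \<phi> using grpG grpH hom by (simp add: group_hom_def group_hom_axioms_def)
  have surj: "\<phi> ` carrier G = carrier H"
  proof
    show "\<phi> ` carrier G \<subseteq> carrier H" using hom hom_carrier by blast
  next
    show "carrier H \<subseteq> \<phi> ` carrier G"
    proof
      fix t assume t: "t \<in> carrier H"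
      define u where "u = (\<lambda>k::nat. if k = 0 then t 1 else t (k + 1))"
      define v' where "v' = B u"
      define v where "v = (\<lambda>i\<in>{..l}. if i < l then v' i else t 0 - (\<Sum>j<l. s j * v' j))"
      have vG: "v \<in> carrier G" unfolding cG v_def by simp
      have "eqv l v v'" unfolding eqv_def v_def by simp
      hence "eqv l (A v) (A v')" by (rule Aloc)
      hence Av: "\<And>i. i < l \<Longrightarrow> A v i = u i" using AB[of u] unfolding eqv_def v'_def by simp
      have sv: "(\<Sum>j<l. s j * v j) = (\<Sum>j<l. s j * v' j)"
        by (rule sum.cong) (auto simp: v_def)
      have s0: "(\<Sum>j\<le>l. s j * v j) = t 0"
        using assms(2) by (simp add: sum_split sv) (simp add: v_def)
      have t1: "t 1 \<in> {0..<\<gamma>}" using t assms(1) unfolding cH by (auto simp: PiE_def Pi_def)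
      have t2: "t i \<in> {0..<\<bar>d\<bar>}" if "2 \<le> i" "i \<le> l" for i
        using t that unfolding cH by (auto simp: PiE_def Pi_def)
      have te: "t i = undefined" if "i \<notin> {..l}" for i using t that unfolding cH by (auto simp: PiE_def extensional_def)
      have "\<phi> v = t"
      proof (rule ext)
        fix i
        show "\<phi> v i = t i"
        proof (cases "i \<le> l")
          case False thus ?thesis unfolding \<phi>_def using te by simp
        next
          case True
          show ?thesis
          proof (cases "i = 0")
            case True thus ?thesis unfolding \<phi>_def using s0 by simp
          next
            case nz: False
            show ?thesis
            proof (cases "i = 1")
              case True thus ?thesis unfolding \<phi>_def using assms(1) Av[of 0] t1 by (simp add: u_def)
            next
              case False
              hence "2 \<le> i" using nz by simp
              thus ?thesis unfolding \<phi>_def using True nz False Av[of "i - 1"] t2[of i]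
                by (simp add: u_def)
            qed
          qed
        qed
      qed
      thus "t \<in> \<phi> ` carrier G" using vG by blast
    qed
  qed
  have one: "\<one>\<^bsub>H\<^esub> = (\<lambda>i\<in>{..l}. 0)" unfolding H_def target_group_def by (simp add: fun_eq_iff)
  have kc: "\<phi> v = \<one>\<^bsub>H\<^esub> \<longleftrightarrow> (\<Sum>j\<le>l. s j * v j) = 0 \<and> \<gamma> dvd A v 0 \<and> (\<forall>k. 1 \<le> k \<and> k < l \<longrightarrow> d dvd A v k)" for v
  proof
    assume h: "\<phi> v = \<one>\<^bsub>H\<^esub>"
    have h0: "\<phi> v i = 0" if "i \<le> l" for i using fun_cong[OF h, of i] that unfolding one by simp
    have "(\<Sum>j\<le>l. s j * v j) = 0" using h0[of 0] unfolding \<phi>_def by simp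
    moreover have "A v 0 mod \<gamma> = 0" using h0[of 1] assms(1) unfolding \<phi>_def by simp
    hence "\<gamma> dvd A v 0" by (simp add: dvd_eq_mod_eq_0)
    moreover have "d dvd A v k" if "1 \<le> k" "k < l" for k
    proof -
      have "A v k mod \<bar>d\<bar> = 0" using h0[of "k + 1"] that unfolding \<phi>_def by simp
      hence "\<bar>d\<bar> dvd A v k" by (simp add: dvd_eq_mod_eq_0)
      thus ?thesis by simp
    qed
    ultimately show "(\<Sum>j\<le>l. s j * v j) = 0 \<and> \<gamma> dvd A v 0 \<and> (\<forall>k. 1 \<le> k \<and> k < l \<longrightarrow> d dvd A v k)"
      by blast
  next
    assume h: "(\<Sum>j\<le>l. s j * v j) = 0 \<and> \<gamma> dvd A v 0 \<and> (\<forall>k. 1 \<le> k \<and> k < l \<longrightarrow> d dvd A v k)"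
    show "\<phi> v = \<one>\<^bsub>H\<^esub>"
      unfolding one
    proof (rule ext)
      fix i
      show "\<phi> v i = (\<lambda>i\<in>{..l}. 0) i"
      proof (cases "i \<le> l")
        case False thus ?thesis unfolding \<phi>_def by simp
      next
        case il: True
        show ?thesis
        proof (cases "i = 0")
          case True thus ?thesis using h unfolding \<phi>_def by simp
        next
          case nz: False
          show ?thesis
          proof (cases "i = 1")
            case True thus ?thesis using h il unfolding \<phi>_def by (simp add: dvd_eq_mod_eq_0)
          next
            case False
            hence "1 \<le> i - 1 \<and> i - 1 < l" using nz il by arith
            hence "d dvd A v (i - 1)" using h by blast
            hence "\<bar>d\<bar> dvd A v (i - 1)" by simp
            hence "A v (i - 1) mod \<bar>d\<bar> = 0" by (simp only: dvd_eq_mod_eq_0)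
            thus ?thesis using False nz il unfolding \<phi>_def by simp
          qed
        qed
      qed
    qed
  qed
  have Lm: "Lmap l s p v = (\<lambda>i\<in>{..l}. d * v i - p i * (\<Sum>j\<le>l. s j * v j))" for v
    unfolding Lmap_def d_def ..
  have ker: "kernel G H \<phi> = Lmap l s p ` carrier G"
  proof
    show "Lmap l s p ` carrier G \<subseteq> kernel G H \<phi>"
    proof
      fix w assume "w \<in> Lmap l s p ` carrier G"
      then obtain v where w: "w = Lmap l s p v" by blast
      define S where "S = (\<Sum>j\<le>l. s j * v j)"
      have wG: "w \<in> carrier G" unfolding w cG Lm by simp
      have "(\<Sum>j\<le>l. s j * w j) = (\<Sum>j\<le>l. d * (s j * v j) - S * (s j * p j))"
        unfolding w Lm S_def by (rule sum.cong) (simp_all add: algebra_simps)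
      also have "\<dots> = d * S - S * d"
        by (simp add: sum_subtractf sum_distrib_left S_def d_def)
      finally have sw: "(\<Sum>j\<le>l. s j * w j) = 0" by simp
      have "eqv l w (\<lambda>i. d * v i + (- S) * p i)" unfolding eqv_def w Lm S_def by simp
      hence "eqv l (A w) (A (\<lambda>i. d * v i + (- S) * p i))" by (rule Aloc)
      moreover have "eqv l (A (\<lambda>i. d * v i + (- S) * p i)) (\<lambda>i. d * A v i + (- S) * A p i)"
        by (rule good_lin[OF gA])
      ultimately have Aw: "\<And>i. i < l \<Longrightarrow> A w i = d * A v i - S * (if i = 0 then g else 0)"
        using ap unfolding eqv_def by simp
      have "\<gamma> dvd A w 0" using Aw[of 0] assms(1) gd by simp
      moreover have "\<forall>k. 1 \<le> k \<and> k < l \<longrightarrow> d dvd A w k" using Aw by simp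
      ultimately have "\<phi> w = \<one>\<^bsub>H\<^esub>" using kc sw by blast
      thus "w \<in> kernel G H \<phi>" using wG unfolding kernel_def by simp
    qed
  next
    show "kernel G H \<phi> \<subseteq> Lmap l s p ` carrier G"
    proof
      fix v assume "v \<in> kernel G H \<phi>"
      hence vG: "v \<in> carrier G" and "\<phi> v = \<one>\<^bsub>H\<^esub>" unfolding kernel_def by auto
      hence sv: "(\<Sum>j\<le>l. s j * v j) = 0" and g0: "\<gamma> dvd A v 0"
        and gk: "\<And>k. 1 \<le> k \<Longrightarrow> k < l \<Longrightarrow> d dvd A v k" using kc by blast+
      obtain q where q: "A v 0 = \<gamma> * q" using g0 by blast
      define c where "c = q * a"
      define z where "z = (\<lambda>k. if k = 0 then q * b else A v k div d)"
      have "eqv l (A v) (\<lambda>i. c * A p i + d * z i)"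
        unfolding eqv_def
      proof (intro allI impI)
        fix i assume i: "i < l"
        show "A v i = c * A p i + d * z i"
        proof (cases "i = 0")
          case True
          have "A p 0 = g" using ap assms(1) unfolding eqv_def by simp
          moreover have "A v 0 = (a * g + b * d) * q" using q bez by simp
          ultimately show ?thesis using True unfolding c_def z_def by (simp add: algebra_simps)
        next
          case False
          have "A p i = 0" using ap i False unfolding eqv_def by simp
          moreover have "d dvd A v i" using gk[of i] False i by simp
          ultimately show ?thesis using False unfolding z_def by simp
        qed
      qed
      hence "eqv l (B (A v)) (B (\<lambda>i. c * A p i + d * z i))" by (rule Bloc)
      moreover have "eqv l (B (\<lambda>i. c * A p i + d * z i)) (\<lambda>i. c * B (A p) i + d * B z i)"
        by (rule good_lin[OF gB])
      ultimately have "eqv l v (\<lambda>i. c * B (A p) i + d * B z i)"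
        using BA[of v] eqv_trans eqv_sym by blast
      hence vi: "\<And>i. i < l \<Longrightarrow> v i = c * p i + d * B z i"
        using BA[of p] unfolding eqv_def by simp
      define u where "u = B z"
      define x where "x = (\<lambda>i\<in>{..l}. if i < l then u i else - c - (\<Sum>j<l. s j * u j))"
      have xG: "x \<in> carrier G" unfolding cG x_def by simp
      have sx0: "(\<Sum>j<l. s j * x j) = (\<Sum>j<l. s j * u j)"
        by (rule sum.cong) (auto simp: x_def)
      have sx: "(\<Sum>j\<le>l. s j * x j) = - c"
        using assms(2) by (simp add: sum_split sx0) (simp add: x_def)
      have svl: "v l = - (\<Sum>j<l. s j * v j)" using sv by (simp add: sum_split assms(2))
      have "(\<Sum>j<l. s j * v j) = (\<Sum>j<l. c * (s j * p j) + d * (s j * u j))"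
        by (rule sum.cong) (simp_all add: vi u_def algebra_simps)
      also have "\<dots> = c * (\<Sum>j<l. s j * p j) + d * (\<Sum>j<l. s j * u j)"
        by (simp add: sum.distrib sum_distrib_left)
      finally have svs: "(\<Sum>j<l. s j * v j) = c * (d - p l) + d * (\<Sum>j<l. s j * u j)"
        using dsp by simp
      have ve: "v \<in> extensional {..l}" using vG unfolding cG by (simp add: PiE_def)
      have "Lmap l s p x = v"
      proof (rule ext)
        fix i
        show "Lmap l s p x i = v i"
        proof (cases "i \<le> l")
          case False thus ?thesis using ve unfolding Lm by (simp add: extensional_def)
        next
          case True
          show ?thesis
          proof (cases "i < l")
            case True
            thus ?thesis unfolding Lm using sx vi by (simp add: x_def u_def algebra_simps)
          next
            case False
            hence "i = l" using \<open>i \<le> l\<close> by simp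
            thus ?thesis unfolding Lm using sx svl svs by (simp add: x_def algebra_simps)
          qed
        qed
      qed
      thus "v \<in> Lmap l s p ` carrier G" using xG by blast
    qed
  qed
  have "G Mod kernel G H \<phi> \<cong> H" by (rule gh.FactGroup_iso[OF surj])
  hence "G Mod (Lmap l s p ` carrier G) \<cong> H" by (simp only: ker)
  thus ?thesis unfolding G_def H_def \<gamma>_def d_def .
qed

end
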